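(* Let $\mathcal{V}$ and $\mathcal{W}$ be quaternionic two-sided Banach algebras with unit $1\neq 0$, let $\mathcal{A}:\mathcal{V}\to\mathcal{W}$ be a bounded below homomorphism, and let $a\in\mathcal{V}$. Then $\partial\sigma_{S}(a)\subset\partial\sigma_{S,\mathcal{A}}^{\Phi}(a)$, where $\partial$ denotes the boundary in $\mathbb{H}$.
   Context: $\mathbb{H}$ denotes the quaternions, $Re(q)$ the real part and $|q|$ the norm of $q$. A quaternionic two-sided Banach algebra with unit is a two-sided $\mathbb{H}$-vector space $\mathcal{V}$ with an associative product satisfying $x(y+z)=xy+xz$, $(x+y)z=xz+yz$, $q(xy)=(qx)y$, $(xy)q=x(yq)$, complete for a norm with $\|qx\|=|q|\|x\|=\|xq\|$, $\|xy\|\le\|x\|\|y\|$, with unit $1_{\mathcal{V}}$, $\|1_{\mathcal{V}}\|=1$. A homomorphism $\mathcal{A}$ is additive, multiplicative, $\mathbb{H}$-linear on both sides and unital; it is bounded below if there is $c>0$ with $\|\mathcal{A}(v)\|\ge c\|v\|$ for all $v$. $\mathcal{V}^{-1}$ denotes invertible elements. $R_q(v)=v^2-2Re(q)v+|q|^21_{\mathcal{V}}$. The S-spectrum is $\sigma_S(v)=\{q\in\mathbb{H}:R_q(v)\notin\mathcal{V}^{-1}\}$. $\Phi_{\mathcal{A}}=\{v:\mathcal{A}(v)\in\mathcal{W}^{-1}\}$ and $\sigma_{S,\mathcal{A}}^{\Phi}(v)=\{q\in\mathbb{H}:R_q(v)\notin\Phi_{\mathcal{A}}\}$. *)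

theory Defs
  imports "HOL-Analysis.Analysis"
begin

text \<open>Quaternions are modelled as real 4-tuples (a,b,c,d) = a + b i + c j + d k,
  carrying the Euclidean norm/topology of the product type (norm = quaternionic modulus).\<close>

type_synonym quat = "real \<times> real \<times> real \<times> real"

definition qmul :: "quat \<Rightarrow> quat \<Rightarrow> quat" where
  "qmul p q = (case p of (a1, b1, c1, d1) \<Rightarrow> case q of (a2, b2, c2, d2) \<Rightarrow>
     (a1*a2 - b1*b2 - c1*c2 - d1*d2,
      a1*b2 + b1*a2 + c1*d2 - d1*c2,
      a1*c2 - b1*d2 + c1*a2 + d1*b2,
      a1*d2 + b1*c2 - c1*b2 + d1*a2))"

definition qof_real :: "real \<Rightarrow> quat" where
  "qof_real r = (r, 0, 0, 0)"

definition qRe :: "quat \<Rightarrow> real" where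
  "qRe q = fst q"

text \<open>A quaternionic two-sided Banach algebra with unit: the underlying type is a real
  Banach algebra with unit (associativity, distributivity, completeness,
  norm (x*y) \<le> norm x * norm y, norm 1 = 1, 1 \<noteq> 0 come from the type class);
  L is the left and R the right quaternionic scalar multiplication.\<close>

definition quat_two_sided_banach_algebra ::
  "(quat \<Rightarrow> 'v::{real_normed_algebra_1,banach} \<Rightarrow> 'v) \<Rightarrow> ('v \<Rightarrow> quat \<Rightarrow> 'v) \<Rightarrow> bool" where
  "quat_two_sided_banach_algebra L R \<longleftrightarrow>
     (\<forall>p q x. L (qmul p q) x = L p (L q x)) \<and>
     (\<forall>p q x. L (p + q) x = L p x + L q x) \<and>
     (\<forall>q x y. L q (x + y) = L q x + L q y) \<and>
     (\<forall>p q x. R x (qmul p q) = R (R x p) q) \<and>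
     (\<forall>p q x. R x (p + q) = R x p + R x q) \<and>
     (\<forall>q x y. R (x + y) q = R x q + R y q) \<and>
     (\<forall>p q x. R (L q x) p = L q (R x p)) \<and>
     (\<forall>r x. L (qof_real r) x = r *\<^sub>R x \<and> R x (qof_real r) = r *\<^sub>R x) \<and>
     (\<forall>q x y. L q (x * y) = L q x * y) \<and>
     (\<forall>q x y. R (x * y) q = x * R y q) \<and>
     (\<forall>q x. norm (L q x) = norm q * norm x) \<and>
     (\<forall>q x. norm (R x q) = norm q * norm x)"

definition quat_alg_hom ::
  "(quat \<Rightarrow> 'v::{real_normed_algebra_1,banach} \<Rightarrow> 'v) \<Rightarrow> ('v \<Rightarrow> quat \<Rightarrow> 'v) \<Rightarrow>
   (quat \<Rightarrow> 'w::{real_normed_algebra_1,banach} \<Rightarrow> 'w) \<Rightarrow> ('w \<Rightarrow> quat \<Rightarrow> 'w) \<Rightarrow>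
   ('v \<Rightarrow> 'w) \<Rightarrow> bool" where
  "quat_alg_hom LV RV LW RW A \<longleftrightarrow>
     (\<forall>x y. A (x + y) = A x + A y) \<and>
     (\<forall>x y. A (x * y) = A x * A y) \<and>
     (\<forall>q x. A (LV q x) = LW q (A x)) \<and>
     (\<forall>q x. A (RV x q) = RW (A x) q) \<and>
     A 1 = 1"

definition bounded_below :: "('v::real_normed_vector \<Rightarrow> 'w::real_normed_vector) \<Rightarrow> bool" where
  "bounded_below A \<longleftrightarrow> (\<exists>c>0. \<forall>v. norm (A v) \<ge> c * norm v)"

definition invertible_elem :: "'a::ring_1 \<Rightarrow> bool" where
  "invertible_elem x \<longleftrightarrow> (\<exists>y. x * y = 1 \<and> y * x = 1)"

definition Rq :: "quat \<Rightarrow> 'v::real_normed_algebra_1 \<Rightarrow> 'v" where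
  "Rq q v = v * v - (2 * qRe q) *\<^sub>R v + (norm q)\<^sup>2 *\<^sub>R 1"

definition S_spectrum :: "'v::real_normed_algebra_1 \<Rightarrow> quat set" where
  "S_spectrum v = {q. \<not> invertible_elem (Rq q v)}"

definition Phi_set :: "('v \<Rightarrow> 'w::ring_1) \<Rightarrow> 'v set" where
  "Phi_set A = {v. invertible_elem (A v)}"

definition S_Phi_spectrum ::
  "('v::real_normed_algebra_1 \<Rightarrow> 'w::ring_1) \<Rightarrow> 'v \<Rightarrow> quat set" where
  "S_Phi_spectrum A v = {q. Rq q v \<notin> Phi_set A}"

end

theory Submission
  imports Defs
begin

lemma neumann_one:
  fixes u :: "'a::{real_normed_algebra_1,banach}"
  assumes "norm u < 1"
  shows "\<exists>s. (1 - u) * s = 1 \<and> s * (1 - u) = 1 \<and> norm s \<le> 1 / (1 - norm u)"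
proof -
  have sm: "summable (\<lambda>n. u ^ n)" using complete_algebra_summable_geometric[OF assms] .
  define s where "s = suminf (\<lambda>n. u ^ n)"
  have z: "(\<lambda>n. u ^ n) \<longlonglongrightarrow> 0" using summable_LIMSEQ_zero[OF sm] .
  have t: "(\<lambda>n. u ^ n - u ^ Suc n) sums (u ^ 0 - 0)"
    using telescope_sums'[OF z] .
  have "(\<lambda>n. (1 - u) * u ^ n) sums ((1 - u) * s)"
    using sums_mult[OF summable_sums[OF sm]] s_def by simp
  moreover have "(\<lambda>n. (1 - u) * u ^ n) = (\<lambda>n. u ^ n - u ^ Suc n)"
    by (simp add: algebra_simps)
  ultimately have 1: "(1 - u) * s = 1" using t sums_unique2 by fastforce
  have "(\<lambda>n. u ^ n * (1 - u)) sums (s * (1 - u))"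
    using sums_mult2[OF summable_sums[OF sm]] s_def by simp
  moreover have "(\<lambda>n. u ^ n * (1 - u)) = (\<lambda>n. u ^ n - u ^ Suc n)"
    by (simp add: algebra_simps power_commutes)
  ultimately have 2: "s * (1 - u) = 1" using t sums_unique2 by fastforce
  have gs: "summable (\<lambda>n. norm u ^ n)" using assms by (simp add: summable_geometric)
  have sn: "summable (\<lambda>n. norm (u ^ n))"
    by (rule summable_comparison_test[OF _ gs]) (auto simp: norm_power_ineq)
  have "norm s \<le> (\<Sum>n. norm (u ^ n))" unfolding s_def by (rule summable_norm[OF sn])
  also have "\<dots> \<le> (\<Sum>n. norm u ^ n)"
    by (rule suminf_le[OF _ sn gs]) (simp add: norm_power_ineq)
  also have "\<dots> = 1 / (1 - norm u)" using suminf_geometric[of "norm u"] assms by simp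
  finally show ?thesis using 1 2 by blast
qed

lemma neumann:
  fixes x :: "'a::{real_normed_algebra_1,banach}"
  assumes xy: "x * y = 1" "y * x = 1" and hn: "norm h * norm y < 1"
  shows "\<exists>z. (x + h) * z = 1 \<and> z * (x + h) = 1 \<and> norm z \<le> norm y / (1 - norm h * norm y)"
proof -
  define u where "u = - (y * h)"
  have "norm u \<le> norm h * norm y" unfolding u_def
    using norm_mult_ineq[of y h] by (simp add: mult.commute)
  hence un: "norm u < 1" using hn by simp
  obtain s where s: "(1 - u) * s = 1" "s * (1 - u) = 1" "norm s \<le> 1 / (1 - norm u)"
    using neumann_one[OF un] by blast
  have xh: "x + h = x * (1 - u)" unfolding u_def
    by (simp add: algebra_simps flip: mult.assoc add: xy)
  have "(x + h) * (s * y) = 1" unfolding xh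
    by (metis mult.assoc mult_1_right s(1) xy(1))
  moreover have "(s * y) * (x + h) = 1" unfolding xh
    by (metis mult.assoc mult_1_left s(2) xy(2))
  moreover have "norm (s * y) \<le> norm y / (1 - norm h * norm y)"
  proof -
    have "norm (s * y) \<le> norm s * norm y" by (rule norm_mult_ineq)
    also have "\<dots> \<le> 1 / (1 - norm u) * norm y" by (rule mult_right_mono[OF s(3)]) simp
    also have "\<dots> \<le> 1 / (1 - norm h * norm y) * norm y"
      using \<open>norm u \<le> norm h * norm y\<close> hn un
      by (intro mult_right_mono divide_left_mono) (auto simp: mult_pos_pos)
    finally show ?thesis by simp
  qed
  ultimately show ?thesis by blast
qed

lemma open_invertible: "open {x::'a::{real_normed_algebra_1,banach}. invertible_elem x}"
proof (unfold open_dist, intro ballI)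
  fix x :: 'a assume "x \<in> {x. invertible_elem x}"
  then obtain y where xy: "x * y = 1" "y * x = 1" unfolding invertible_elem_def by blast
  show "\<exists>e>0. \<forall>z. dist z x < e \<longrightarrow> z \<in> {x. invertible_elem x}"
  proof (intro exI[of _ "1 / (norm y + 1)"] conjI allI impI)
    fix z assume d: "dist z x < 1 / (norm y + 1)"
    have "norm (z - x) * norm y < 1"
    proof -
      have "norm (z - x) * norm y \<le> norm (z - x) * (norm y + 1)" by (simp add: mult_left_mono)
      also have "\<dots> < 1" using d pos_less_divide_eq[of "norm y + 1" "norm (z - x)" 1]
        using norm_ge_zero[of y] by (simp add: dist_norm)
      finally show ?thesis .
    qed
    from neumann[OF xy this] show "z \<in> {x. invertible_elem x}"
      unfolding invertible_elem_def by auto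
  qed (smt (verit) norm_ge_zero divide_pos_pos)
qed

lemma inv_unique:
  fixes x :: "'a::ring_1"
  assumes "x * y = 1" "z * x = 1" shows "y = z"
  by (metis assms mult.assoc mult_1_left mult_1_right)

lemma cont_Rq: "continuous (at q) (\<lambda>q. Rq q (v::'v::real_normed_algebra_1))"
  unfolding Rq_def qRe_def by (intro continuous_intros)

theorem mainTheorem4:
  fixes LV :: "quat \<Rightarrow> 'v::{real_normed_algebra_1,banach} \<Rightarrow> 'v"
    and RV :: "'v \<Rightarrow> quat \<Rightarrow> 'v"
    and LW :: "quat \<Rightarrow> 'w::{real_normed_algebra_1,banach} \<Rightarrow> 'w"
    and RW :: "'w \<Rightarrow> quat \<Rightarrow> 'w"
    and A :: "'v \<Rightarrow> 'w"
    and a :: 'v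
  assumes "quat_two_sided_banach_algebra LV RV"
    and "quat_two_sided_banach_algebra LW RW"
    and "quat_alg_hom LV RV LW RW A"
    and "bounded_below A"
  shows "frontier (S_spectrum a) \<subseteq> frontier (S_Phi_spectrum A a)"
proof
  note H = assms(3)[unfolded quat_alg_hom_def]
  have Aadd: "A (x + y) = A x + A y" for x y using H by blast
  have Amul: "A (x * y) = A x * A y" for x y using H by blast
  have A1: "A 1 = 1" using H by blast
  have Ascal: "A (r *\<^sub>R x) = r *\<^sub>R A x" for r x
    using H assms(1,2) unfolding quat_two_sided_banach_algebra_def by metis
  have Asub: "A (x - y) = A x - A y" for x y
    using Aadd[of "x - y" y] by (simp add: algebra_simps)
  have ARq: "A (Rq p a) = Rq p (A a)" for p
    unfolding Rq_def by (simp add: Aadd Asub Amul Ascal A1)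
  obtain c where c: "c > 0" "\<And>v. norm (A v) \<ge> c * norm v"
    using assms(4) unfolding bounded_below_def by blast
  have Ainv: "invertible_elem (A x)" if "invertible_elem x" for x
    using that unfolding invertible_elem_def by (metis Amul A1)
  have sub: "S_Phi_spectrum A a \<subseteq> S_spectrum a"
    unfolding S_Phi_spectrum_def S_spectrum_def Phi_set_def using Ainv by blast
  have closedS: "closed (S_spectrum a)"
  proof -
    have "S_spectrum a = (\<lambda>q. Rq q a) -` {x. \<not> invertible_elem x}"
      unfolding S_spectrum_def by auto
    moreover have "closed {x::'v. \<not> invertible_elem x}"
      by (rule closed_Collect_neg[OF open_invertible])
    ultimately show ?thesis using continuous_closed_vimage cont_Rq by metis
  qed
  fix q assume q: "q \<in> frontier (S_spectrum a)"
  have qS: "q \<in> S_spectrum a" using q closedS frontier_subset_closed by blast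
  have qnotint: "q \<notin> interior (S_Phi_spectrum A a)"
    using q sub interior_mono unfolding frontier_def by blast
  have "q \<in> S_Phi_spectrum A a"
  proof (rule ccontr)
    assume "q \<notin> S_Phi_spectrum A a"
    then obtain Y where Y: "Rq q (A a) * Y = 1" "Y * Rq q (A a) = 1"
      unfolding S_Phi_spectrum_def Phi_set_def invertible_elem_def using ARq by auto
    have "0 < 1 / (2 * (norm Y + 1))" by (smt (verit) norm_ge_zero divide_pos_pos)
    from cont_Rq[of q "A a", unfolded continuous_at_eps_delta, rule_format, OF this]
    obtain d1 where d1: "d1 > 0" "\<And>p. dist p q < d1 \<Longrightarrow>
        dist (Rq p (A a)) (Rq q (A a)) < 1 / (2 * (norm Y + 1))" by blast
    define M where "M = 2 * norm Y / c + 1"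
    have Mpos: "M > 0" unfolding M_def using c(1) norm_ge_zero[of Y]
    by (smt (verit) divide_nonneg_pos)
    have bd: "norm y \<le> M" if p: "dist p q < d1" and py: "Rq p a * y = 1" "y * Rq p a = 1" for p y
    proof -
      let ?h = "Rq p (A a) - Rq q (A a)"
      have hn: "norm ?h < 1 / (2 * (norm Y + 1))" using d1(2)[OF p] by (simp add: dist_norm)
      have hY: "norm ?h * norm Y \<le> 1/2"
      proof -
        have "norm ?h * norm Y \<le> norm ?h * (norm Y + 1)" by (simp add: mult_left_mono)
        also have "\<dots> \<le> 1/2"
          using hn pos_less_divide_eq[of "2 * (norm Y + 1)" "norm ?h" 1]
          using norm_ge_zero[of Y] by (simp add: algebra_simps)
        finally show ?thesis .
      qed
      obtain z where z: "(Rq q (A a) + ?h) * z = 1" "z * (Rq q (A a) + ?h) = 1"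
          "norm z \<le> norm Y / (1 - norm ?h * norm Y)"
        using neumann[OF Y, of ?h] hY by auto
      have zb: "norm z \<le> 2 * norm Y"
      proof -
        have "norm Y / (1 - norm ?h * norm Y) \<le> norm Y / (1/2)"
          using hY by (intro divide_left_mono) auto
        thus ?thesis using z(3) by simp
      qed
      have "A y * Rq p (A a) = 1" using py(2) by (metis Amul ARq A1)
      hence "A y = z" using inv_unique[of "Rq p (A a)" z "A y"] z(1) by simp
      hence "c * norm y \<le> 2 * norm Y" using c(2)[of y] zb by simp
      hence "norm y \<le> 2 * norm Y / c" using c(1) by (simp add: field_simps)
      thus ?thesis unfolding M_def by simp
    qed
    have "0 < 1 / M" using Mpos by simp
    from cont_Rq[of q a, unfolded continuous_at_eps_delta, rule_format, OF this]
    obtain d2 where d2: "d2 > 0" "\<And>p. dist p q < d2 \<Longrightarrow>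
        dist (Rq p a) (Rq q a) < 1 / M" by blast
    obtain p where p: "p \<notin> S_spectrum a" "dist q p < min d1 d2"
      using q[unfolded frontier_straddle] d1(1) d2(1) by (meson min_less_iff_conj)
    obtain y where py: "Rq p a * y = 1" "y * Rq p a = 1"
      using p(1) unfolding S_spectrum_def invertible_elem_def by auto
    have yM: "norm y \<le> M" using bd[OF _ py] p(2) by (simp add: dist_commute)
    have hn: "norm (Rq q a - Rq p a) < 1 / M" using d2(2)[of p] p(2)
      by (simp add: dist_norm norm_minus_commute dist_commute)
    have "norm (Rq q a - Rq p a) * norm y < 1"
    proof -
      have "norm (Rq q a - Rq p a) * norm y \<le> norm (Rq q a - Rq p a) * M"
        using yM by (simp add: mult_left_mono)
      also have "\<dots> < 1" using hn Mpos by (simp add: field_simps)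
      finally show ?thesis .
    qed
    from neumann[OF py this] have "invertible_elem (Rq q a)"
      unfolding invertible_elem_def by auto
    thus False using qS unfolding S_spectrum_def by simp
  qed
  thus "q \<in> frontier (S_Phi_spectrum A a)"
    using qnotint closure_subset unfolding frontier_def by blast
qed

end
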